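(* Let $\mathbb{F}\in\{\mathbb{R},\mathbb{C}\}$, let $\{\mathcal{B}_k\}_{k\in K}$ be a maximal set of mutually unbiased bases for $\mathbb{F}^m$, so $|K|=k_{\mathbb{F}}(m)$, and let $\mathbb{S}$ be a collection of subsets of $\{1,\dots,m\}$, each of size $l$. Suppose $\mathcal{F}=\{P^{(k)}_{\mathcal{J}}:k\in K,\ \mathcal{J}\in\mathbb{S}\}$ is a $(2d_{\mathbb{F}}(m),m/2,m)$-fusion frame, where $P^{(k)}_{\mathcal{J}}$ is the $\mathcal{J}$-coordinate projection with respect to $\mathcal{B}_k$. Then $\mathcal{F}$ is a Grassmannian $2$-design if and only if $\mathbb{S}$ is a $2$-$(m,m/2,m/2-1)$ block design.
   Context: Orthonormal bases $\{b_j\},\{b'_j\}$ of $\mathbb{F}^m$ are mutually unbiased if $|\langle b_j,b'_{j'}\rangle|^2=1/m$ for all $j,j'$; a set of mutually unbiased bases consists of pairwise mutually unbiased orthonormal bases, and it is maximal if it has $k_{\mathbb{F}}(m)$ elements, where $k_{\mathbb{R}}(m)=m/2+1$, $k_{\mathbb{C}}(m)=m+1$. Let $d_{\mathbb{F}}(m)=\frac{(m+2)(m-1)}{2}$ if $\mathbb{F}=\mathbb{R}$ and $m^2-1$ if $\mathbb{F}=\mathbb{C}$. The $\mathcal{J}$-coordinate projection with respect to $\{b_j\}$ is $\sum_{j\in\mathcal{J}}b_j\otimes b_j^*$. An $(n,l,m)$-fusion frame is a set of $n$ orthogonal projections onto $l$-dimensional subspaces of $\mathbb{F}^m$ with $A\|x\|^2\le\sum_j\|P_jx\|^2\le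 B\|x\|^2$ for some $0<A\le B$. A fusion frame $\{P_j\}_{j=1}^n$ is a Grassmannian $2$-design if $\sum_jP_j\otimes P_j=\sum_j(UP_jU^* )\otimes(UP_jU^* )$ for every orthogonal (real case) or unitary (complex case) $U$. A $2$-$(m,l,\lambda)$ block design is a collection of $l$-element subsets of $\{1,\dots,m\}$ such that every $2$-element subset is contained in exactly $\lambda$ of them. *)

theory Defs
  imports Complex_Main
begin

text \<open>The field is encoded by a flag: realF = True means F = R,
 realF = False means F = C. Vectors of F^m are functions nat => complex, only the
 coordinates 0..<m being relevant; in the real case all relevant coordinates are
 required to be real. Matrices are functions nat => nat => complex (entries i,j < m).
 Indices run over 0..<m instead of 1..m.\<close>

type_synonym cvec = "nat \<Rightarrow> complex"
type_synonym cmat = "nat \<Rightarrow> nat \<Rightarrow> complex"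

definition in_F :: "bool \<Rightarrow> nat \<Rightarrow> cvec \<Rightarrow> bool" where
  "in_F realF m v \<longleftrightarrow> (realF \<longrightarrow> (\<forall>i<m. v i \<in> \<real>))"

definition mat_in_F :: "bool \<Rightarrow> nat \<Rightarrow> cmat \<Rightarrow> bool" where
  "mat_in_F realF m U \<longleftrightarrow> (realF \<longrightarrow> (\<forall>i<m. \<forall>j<m. U i j \<in> \<real>))"

definition inner_F :: "nat \<Rightarrow> cvec \<Rightarrow> cvec \<Rightarrow> complex" where
  "inner_F m u v = (\<Sum>i<m. u i * cnj (v i))"

definition norm_sq :: "nat \<Rightarrow> cvec \<Rightarrow> real" where
  "norm_sq m x = (\<Sum>i<m. (cmod (x i))\<^sup>2)"

definition mat_vec :: "nat \<Rightarrow> cmat \<Rightarrow> cvec \<Rightarrow> cvec" where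
  "mat_vec m P x = (\<lambda>i. \<Sum>j<m. P i j * x j)"

definition orthonormal_basis :: "bool \<Rightarrow> nat \<Rightarrow> (nat \<Rightarrow> cvec) \<Rightarrow> bool" where
  "orthonormal_basis realF m b \<longleftrightarrow>
     (\<forall>j<m. in_F realF m (b j)) \<and>
     (\<forall>j<m. \<forall>j'<m. inner_F m (b j) (b j') = (if j = j' then 1 else 0))"

definition mutually_unbiased :: "nat \<Rightarrow> (nat \<Rightarrow> cvec) \<Rightarrow> (nat \<Rightarrow> cvec) \<Rightarrow> bool" where
  "mutually_unbiased m b b' \<longleftrightarrow>
     (\<forall>j<m. \<forall>j'<m. (cmod (inner_F m (b j) (b' j')))\<^sup>2 = 1 / real m)"

definition kF :: "bool \<Rightarrow> nat \<Rightarrow> nat" where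
  "kF realF m = (if realF then m div 2 + 1 else m + 1)"

definition dF :: "bool \<Rightarrow> nat \<Rightarrow> nat" where
  "dF realF m = (if realF then (m + 2) * (m - 1) div 2 else m\<^sup>2 - 1)"

definition MUB_set :: "bool \<Rightarrow> nat \<Rightarrow> 'k set \<Rightarrow> ('k \<Rightarrow> nat \<Rightarrow> cvec) \<Rightarrow> bool" where
  "MUB_set realF m K B \<longleftrightarrow>
     (\<forall>k\<in>K. orthonormal_basis realF m (B k)) \<and>
     (\<forall>k\<in>K. \<forall>k'\<in>K. k \<noteq> k' \<longrightarrow> mutually_unbiased m (B k) (B k'))"

definition maximal_MUB_set :: "bool \<Rightarrow> nat \<Rightarrow> 'k set \<Rightarrow> ('k \<Rightarrow> nat \<Rightarrow> cvec) \<Rightarrow> bool" where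
  "maximal_MUB_set realF m K B \<longleftrightarrow>
     MUB_set realF m K B \<and> finite K \<and> card K = kF realF m"

definition coord_proj :: "(nat \<Rightarrow> cvec) \<Rightarrow> nat set \<Rightarrow> cmat" where
  "coord_proj b J = (\<lambda>i i'. \<Sum>j\<in>J. b j i * cnj (b j i'))"

definition orth_proj_rank :: "bool \<Rightarrow> nat \<Rightarrow> nat \<Rightarrow> cmat \<Rightarrow> bool" where
  "orth_proj_rank realF m l P \<longleftrightarrow>
     (\<exists>v :: nat \<Rightarrow> cvec.
        (\<forall>a<l. in_F realF m (v a)) \<and>
        (\<forall>a<l. \<forall>a'<l. inner_F m (v a) (v a') = (if a = a' then 1 else 0)) \<and>
        (\<forall>i<m. \<forall>i'<m. P i i' = (\<Sum>a<l. v a i * cnj (v a i'))))"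

definition fusion_frame :: "bool \<Rightarrow> nat \<Rightarrow> nat \<Rightarrow> nat \<Rightarrow> 'i set \<Rightarrow> ('i \<Rightarrow> cmat) \<Rightarrow> bool" where
  "fusion_frame realF n l m I P \<longleftrightarrow>
     finite I \<and> card I = n \<and> (\<forall>i\<in>I. orth_proj_rank realF m l (P i)) \<and>
     (\<exists>A B. 0 < A \<and> A \<le> B \<and>
        (\<forall>x. in_F realF m x \<longrightarrow>
           A * norm_sq m x \<le> (\<Sum>i\<in>I. norm_sq m (mat_vec m (P i) x)) \<and>
           (\<Sum>i\<in>I. norm_sq m (mat_vec m (P i) x)) \<le> B * norm_sq m x))"

definition unitary_F :: "bool \<Rightarrow> nat \<Rightarrow> cmat \<Rightarrow> bool" where
  "unitary_F realF m U \<longleftrightarrow> mat_in_F realF m U \<and>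
     (\<forall>i<m. \<forall>j<m. (\<Sum>k<m. U i k * cnj (U j k)) = (if i = j then 1 else 0))"

definition conj_by :: "nat \<Rightarrow> cmat \<Rightarrow> cmat \<Rightarrow> cmat" where
  "conj_by m U P = (\<lambda>i j. \<Sum>a<m. \<Sum>b<m. U i a * P a b * cnj (U j b))"

definition tensor :: "cmat \<Rightarrow> cmat \<Rightarrow> (nat \<times> nat) \<Rightarrow> (nat \<times> nat) \<Rightarrow> complex" where
  "tensor A B = (\<lambda>(a, b) (c, d). A a c * B b d)"

definition grassmannian_2_design :: "bool \<Rightarrow> nat \<Rightarrow> 'i set \<Rightarrow> ('i \<Rightarrow> cmat) \<Rightarrow> bool" where
  "grassmannian_2_design realF m I P \<longleftrightarrow>
     (\<forall>U. unitary_F realF m U \<longrightarrow>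
        (\<forall>a<m. \<forall>b<m. \<forall>c<m. \<forall>d<m.
           (\<Sum>i\<in>I. tensor (P i) (P i) (a, b) (c, d)) =
           (\<Sum>i\<in>I. tensor (conj_by m U (P i)) (conj_by m U (P i)) (a, b) (c, d))))"

definition block_design_2 :: "nat \<Rightarrow> nat \<Rightarrow> nat \<Rightarrow> nat set set \<Rightarrow> bool" where
  "block_design_2 m l lam S \<longleftrightarrow>
     (\<forall>J\<in>S. J \<subseteq> {0..<m} \<and> card J = l) \<and>
     (\<forall>p. p \<subseteq> {0..<m} \<and> card p = 2 \<longrightarrow> card {J\<in>S. p \<subseteq> J} = lam)"

end

theory Submission
  imports Defs
begin

lemma sumsq_zero_imp:
  fixes T R :: "'d \<Rightarrow> 'd \<Rightarrow> complex"
  assumes "finite D"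
    and "(\<Sum>x\<in>D. \<Sum>y\<in>D. (T x y - R x y) * cnj (T x y - R x y)) = 0"
    and "x \<in> D" "y \<in> D"
  shows "T x y = R x y"
proof -
  have e: "(\<Sum>x\<in>D. \<Sum>y\<in>D. (T x y - R x y) * cnj (T x y - R x y))
     = complex_of_real (\<Sum>x\<in>D. \<Sum>y\<in>D. (cmod (T x y - R x y))\<^sup>2)"
    unfolding complex_norm_square[symmetric] of_real_sum ..
  have "(\<Sum>x\<in>D. \<Sum>y\<in>D. (cmod (T x y - R x y))\<^sup>2) = 0"
  proof -
    have "complex_of_real (\<Sum>x\<in>D. \<Sum>y\<in>D. (cmod (T x y - R x y))\<^sup>2) = 0"
      using assms(2) e by (simp only:)
    then show ?thesis by (simp only: of_real_eq_0_iff)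
  qed
  then have "\<forall>x\<in>D. (\<Sum>y\<in>D. (cmod (T x y - R x y))\<^sup>2) = 0"
    using assms(1) by (subst (asm) sum_nonneg_eq_0_iff) (auto intro: sum_nonneg)
  then have "(\<Sum>y\<in>D. (cmod (T x y - R x y))\<^sup>2) = 0" using assms(3) by blast
  then have "(cmod (T x y - R x y))\<^sup>2 = 0"
    using assms(1,4) by (subst (asm) sum_nonneg_eq_0_iff) auto
  then show ?thesis by simp
qed

lemma swap4:
  "(\<Sum>x\<in>D. \<Sum>y\<in>D. \<Sum>i\<in>I. \<Sum>i'\<in>I. f x y i i') = (\<Sum>i\<in>I. \<Sum>i'\<in>I. \<Sum>x\<in>D. \<Sum>y\<in>D. f x y i i')"
proof -
  have "(\<Sum>x\<in>D. \<Sum>y\<in>D. \<Sum>i\<in>I. \<Sum>i'\<in>I. f x y i i') = (\<Sum>x\<in>D. \<Sum>i\<in>I. \<Sum>y\<in>D. \<Sum>i'\<in>I. f x y i i')"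
    by (rule sum.cong[OF refl], rule sum.swap)
  also have "\<dots> = (\<Sum>i\<in>I. \<Sum>x\<in>D. \<Sum>y\<in>D. \<Sum>i'\<in>I. f x y i i')"
    by (rule sum.swap)
  also have "\<dots> = (\<Sum>i\<in>I. \<Sum>x\<in>D. \<Sum>i'\<in>I. \<Sum>y\<in>D. f x y i i')"
    by (rule sum.cong[OF refl], rule sum.cong[OF refl], rule sum.swap)
  also have "\<dots> = (\<Sum>i\<in>I. \<Sum>i'\<in>I. \<Sum>x\<in>D. \<Sum>y\<in>D. f x y i i')"
    by (rule sum.cong[OF refl], rule sum.swap)
  finally show ?thesis .
qed

lemma swap3:
  "(\<Sum>x\<in>D. \<Sum>y\<in>D. \<Sum>i\<in>I. f x y i) = (\<Sum>i\<in>I. \<Sum>x\<in>D. \<Sum>y\<in>D. f x y i)"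
proof -
  have "(\<Sum>x\<in>D. \<Sum>y\<in>D. \<Sum>i\<in>I. f x y i) = (\<Sum>x\<in>D. \<Sum>i\<in>I. \<Sum>y\<in>D. f x y i)"
    by (rule sum.cong[OF refl], rule sum.swap)
  also have "\<dots> = (\<Sum>i\<in>I. \<Sum>x\<in>D. \<Sum>y\<in>D. f x y i)"
    by (rule sum.swap)
  finally show ?thesis .
qed

lemma gram_expand:
  fixes u :: "'i \<Rightarrow> 'd \<Rightarrow> complex" and R :: "'d \<Rightarrow> 'd \<Rightarrow> complex"
  shows "(\<Sum>x\<in>D. \<Sum>y\<in>D. ((\<Sum>i\<in>I. u i x * cnj (u i y)) - R x y) * cnj ((\<Sum>i\<in>I. u i x * cnj (u i y)) - R x y))
    = (\<Sum>i\<in>I. \<Sum>i'\<in>I. (\<Sum>x\<in>D. u i x * cnj (u i' x)) * cnj (\<Sum>x\<in>D. u i x * cnj (u i' x)))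
      - (\<Sum>i\<in>I. \<Sum>x\<in>D. \<Sum>y\<in>D. cnj (u i x) * R x y * u i y)
      - cnj (\<Sum>i\<in>I. \<Sum>x\<in>D. \<Sum>y\<in>D. cnj (u i x) * R x y * u i y)
      + (\<Sum>x\<in>D. \<Sum>y\<in>D. R x y * cnj (R x y))"
proof -
  let ?T = "\<lambda>x y. \<Sum>i\<in>I. u i x * cnj (u i y)"
  have split: "\<And>x y. (?T x y - R x y) * cnj (?T x y - R x y)
     = ?T x y * cnj (?T x y) - ?T x y * cnj (R x y) - R x y * cnj (?T x y) + R x y * cnj (R x y)"
    by (simp add: algebra_simps)
  have A1: "\<And>x y. ?T x y * cnj (?T x y) = (\<Sum>i\<in>I. \<Sum>i'\<in>I. (u i x * cnj (u i' x)) * (cnj (u i y) * u i' y))"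
    by (simp only: cnj_sum sum_product complex_cnj_mult complex_cnj_cnj) (intro sum.cong refl, simp add: mult_ac)
  have A2: "\<And>i i'. (\<Sum>x\<in>D. \<Sum>y\<in>D. (u i x * cnj (u i' x)) * (cnj (u i y) * u i' y))
     = (\<Sum>x\<in>D. u i x * cnj (u i' x)) * cnj (\<Sum>x\<in>D. u i x * cnj (u i' x))"
    by (simp only: cnj_sum sum_product complex_cnj_mult complex_cnj_cnj)
  have A: "(\<Sum>x\<in>D. \<Sum>y\<in>D. ?T x y * cnj (?T x y))
     = (\<Sum>i\<in>I. \<Sum>i'\<in>I. (\<Sum>x\<in>D. u i x * cnj (u i' x)) * cnj (\<Sum>x\<in>D. u i x * cnj (u i' x)))"
    unfolding A1 swap4 A2 ..
  have B1: "\<And>x y. R x y * cnj (?T x y) = (\<Sum>i\<in>I. cnj (u i x) * R x y * u i y)"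
    by (simp only: cnj_sum sum_distrib_left complex_cnj_mult complex_cnj_cnj) (intro sum.cong refl, simp add: mult_ac)
  have B: "(\<Sum>x\<in>D. \<Sum>y\<in>D. R x y * cnj (?T x y)) = (\<Sum>i\<in>I. \<Sum>x\<in>D. \<Sum>y\<in>D. cnj (u i x) * R x y * u i y)"
    unfolding B1 swap3 ..
  have C: "(\<Sum>x\<in>D. \<Sum>y\<in>D. ?T x y * cnj (R x y)) = cnj (\<Sum>x\<in>D. \<Sum>y\<in>D. R x y * cnj (?T x y))"
    by (simp only: cnj_sum complex_cnj_mult complex_cnj_cnj mult.commute)
  show ?thesis
    unfolding split sum.distrib sum_subtractf A B[symmetric] C by simp
qed

lemma if0_mult: "(if P then a else 0) * (b::'a::mult_zero) = (if P then a * b else 0)" by simp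
lemma mult_if0: "(b::'a::mult_zero) * (if P then a else 0) = (if P then b * a else 0)" by simp
lemma sum_if_const: "(\<Sum>x\<in>A. if P then f x else 0) = (if P then sum f A else 0)" by simp
lemmas delta_simps = if0_mult mult_if0 sum_if_const

lemma onb_inner:
  assumes "orthonormal_basis realF m b" "j < m" "j' < m"
  shows "(\<Sum>x<m. b j x * cnj (b j' x)) = (if j = j' then 1 else 0)"
  using assms unfolding orthonormal_basis_def inner_F_def by blast

lemma onb_complete:
  assumes onb: "orthonormal_basis realF m b" and "a < m" "c < m"
  shows "(\<Sum>j<m. b j a * cnj (b j c)) = (if a = c then 1 else 0)"
proof -
  let ?R = "\<lambda>x y::nat. (if x = y then 1 else 0) :: complex"
  have ip: "\<And>j j'. j \<in> {..<m} \<Longrightarrow> j' \<in> {..<m} \<Longrightarrow> (\<Sum>x<m. b j x * cnj (b j' x)) = ?R j j'"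
    using onb_inner[OF onb] by auto
  have q: "\<And>j. j \<in> {..<m} \<Longrightarrow> (\<Sum>x<m. \<Sum>y<m. cnj (b j x) * ?R x y * b j y) = 1"
  proof -
    fix j assume "j \<in> {..<m}"
    have "(\<Sum>x<m. \<Sum>y<m. cnj (b j x) * ?R x y * b j y) = (\<Sum>x<m. b j x * cnj (b j x))"
      by (simp add: delta_simps mult.commute)
    also have "\<dots> = 1" using ip[of j j] \<open>j \<in> {..<m}\<close> by simp
    finally show "(\<Sum>x<m. \<Sum>y<m. cnj (b j x) * ?R x y * b j y) = 1" .
  qed
  have "(\<Sum>x<m. \<Sum>y<m. ((\<Sum>j<m. b j x * cnj (b j y)) - ?R x y) * cnj ((\<Sum>j<m. b j x * cnj (b j y)) - ?R x y)) = 0"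
  proof -
    have R2: "(\<Sum>x<m. \<Sum>y<m. ?R x y * cnj (?R x y)) = of_nat m"
      by (simp add: delta_simps)
    have S1: "(\<Sum>i<m. \<Sum>i'<m. (\<Sum>x<m. b i x * cnj (b i' x)) * cnj (\<Sum>x<m. b i x * cnj (b i' x))) = of_nat m"
      using R2 by (simp only: ip cong: sum.cong)
    have S2: "(\<Sum>i<m. \<Sum>x<m. \<Sum>y<m. cnj (b i x) * ?R x y * b i y) = of_nat m"
      by (simp only: q cong: sum.cong) simp
    show ?thesis unfolding gram_expand S1 S2 R2 by simp
  qed
  from sumsq_zero_imp[OF _ this, of a c] assms show ?thesis by simp
qed

definition Rg :: "complex \<Rightarrow> complex \<Rightarrow> complex \<Rightarrow> nat \<Rightarrow> nat \<Rightarrow> nat \<Rightarrow> nat \<Rightarrow> complex" where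
 "Rg \<alpha> \<beta> \<gamma> a b c d = (if b = d then (if a = c then \<alpha> else 0) else 0) + (if a = d then (if b = c then \<beta> else 0) else 0) + (if c = d then (if a = b then \<gamma> else 0) else 0)"

lemma Rg_sq: "(\<Sum>a<m. \<Sum>b<m. \<Sum>c<m. \<Sum>d<m. Rg \<alpha> \<beta> \<gamma> a b c d * cnj (Rg \<alpha> \<beta> \<gamma> a b c d))
  = of_nat m ^2 * (\<alpha> * cnj \<alpha> + \<beta> * cnj \<beta> + \<gamma> * cnj \<gamma>) + of_nat m * (\<alpha> * cnj \<beta> + \<beta> * cnj \<alpha> + \<alpha> * cnj \<gamma> + \<gamma> * cnj \<alpha> + \<beta> * cnj \<gamma> + \<gamma> * cnj \<beta>)"
  unfolding Rg_def
  by (simp add: algebra_simps sum.distrib delta_simps if_distrib[of cnj] power2_eq_square cong: if_cong)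

lemma Rg_q:
  assumes n: "(\<Sum>a<m. v a * cnj (v a)) = 1" and r: "\<gamma> \<noteq> 0 \<Longrightarrow> \<forall>a<m. cnj (v a) = v a"
  shows "(\<Sum>a<m. \<Sum>b<m. \<Sum>c<m. \<Sum>d<m. cnj (v a * v b) * Rg \<alpha> \<beta> \<gamma> a b c d * (v c * v d)) = \<alpha> + \<beta> + \<gamma>"
proof -
  have e1: "(\<Sum>a<m. \<Sum>b<m. cnj (v a) * cnj (v b) * (v a * v b)) = 1"
  proof -
    have "(\<Sum>a<m. \<Sum>b<m. cnj (v a) * cnj (v b) * (v a * v b)) = (\<Sum>a<m. v a * cnj (v a)) * (\<Sum>a<m. v a * cnj (v a))"
      by (simp add: sum_product mult_ac)
    then show ?thesis using n by simp
  qed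
  have e3: "\<gamma> * (\<Sum>a<m. \<Sum>c<m. cnj (v a) * cnj (v a) * (v c * v c)) = \<gamma>"
  proof (cases "\<gamma> = 0")
    case False
    have "(\<Sum>a<m. \<Sum>c<m. cnj (v a) * cnj (v a) * (v c * v c)) = (\<Sum>a<m. v a * cnj (v a)) * (\<Sum>a<m. v a * cnj (v a))"
      using r[OF False] by (simp add: sum_product mult_ac)
    then show ?thesis using n by simp
  qed simp
  have "(\<Sum>a<m. \<Sum>b<m. \<Sum>c<m. \<Sum>d<m. cnj (v a * v b) * Rg \<alpha> \<beta> \<gamma> a b c d * (v c * v d))
     = \<alpha> * (\<Sum>a<m. \<Sum>b<m. cnj (v a) * cnj (v b) * (v a * v b)) + \<beta> * (\<Sum>a<m. \<Sum>b<m. cnj (v a) * cnj (v b) * (v a * v b))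
       + \<gamma> * (\<Sum>a<m. \<Sum>c<m. cnj (v a) * cnj (v a) * (v c * v c))"
    unfolding Rg_def by (simp add: algebra_simps sum.distrib delta_simps sum_distrib_left)
  then show ?thesis using e1 e3 by simp
qed

lemma sum_times: "(\<Sum>x\<in>A\<times>B. f x) = (\<Sum>a\<in>A. \<Sum>b\<in>B. f (a,b))"
  by (simp add: sum.cartesian_product)

lemma sum_if_eq_other:
  assumes "finite K" "k \<in> K"
  shows "(\<Sum>k'\<in>K. if k = k' then A else (Bv::complex)) = A + of_nat (card K - 1) * Bv"
proof -
  have "(\<Sum>k'\<in>K. if k = k' then A else Bv) = (\<Sum>k'\<in>K. Bv + (if k = k' then A - Bv else 0))"
    by (rule sum.cong) auto
  also have "\<dots> = of_nat (card K) * Bv + (A - Bv)"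
    using assms by (simp add: sum.distrib)
  also have "\<dots> = A + of_nat (card K - 1) * Bv"
    using assms by (cases "card K") (auto simp: algebra_simps card_gt_0_iff)
  finally show ?thesis .
qed

definition c\<alpha> :: "bool \<Rightarrow> complex" where "c\<alpha> realF = (if realF then 1/2 else 1)"
definition c\<gamma> :: "bool \<Rightarrow> complex" where "c\<gamma> realF = (if realF then 1/2 else 0)"

lemma mub_design:
  fixes B :: "'k \<Rightarrow> nat \<Rightarrow> cvec"
  assumes MUB: "MUB_set realF m K B" and fin: "finite K" and cK: "card K = kF realF m"
    and m: "0 < m" "even m" and abcd: "a < m" "b < m" "c < m" "d < m"
  shows "(\<Sum>k\<in>K. \<Sum>j<m. B k j a * cnj (B k j c) * (B k j b * cnj (B k j d)))
         = Rg (c\<alpha> realF) (c\<alpha> realF) (c\<gamma> realF) a b c d"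
proof -
  define I where "I = K \<times> {..<m}"
  define D where "D = {..<m} \<times> {..<m}"
  define u where "u = (\<lambda>(k,j) (a::nat,b::nat). B k j a * B k j b)"
  define Rp where "Rp = (\<lambda>(a,b) (c,d). Rg (c\<alpha> realF) (c\<alpha> realF) (c\<gamma> realF) a b c d)"
  let ?\<alpha> = "c\<alpha> realF" and ?\<gamma> = "c\<gamma> realF"
  have onb: "\<And>k. k \<in> K \<Longrightarrow> orthonormal_basis realF m (B k)"
    using MUB unfolding MUB_set_def by blast
  have mu: "\<And>k k' j j'. k \<in> K \<Longrightarrow> k' \<in> K \<Longrightarrow> k \<noteq> k' \<Longrightarrow> j < m \<Longrightarrow> j' < m \<Longrightarrow>
      (cmod (inner_F m (B k j) (B k' j')))\<^sup>2 = 1 / real m"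
    using MUB unfolding MUB_set_def mutually_unbiased_def by blast
  have finI: "finite I" "finite D" using fin unfolding I_def D_def by auto
  have ipval: "\<And>k j k' j'. k \<in> K \<Longrightarrow> k' \<in> K \<Longrightarrow> j < m \<Longrightarrow> j' < m \<Longrightarrow>
     (\<Sum>x\<in>D. u (k,j) x * cnj (u (k',j') x)) * cnj (\<Sum>x\<in>D. u (k,j) x * cnj (u (k',j') x))
      = (if k = k' then (if j = j' then 1 else 0) else 1 / (of_nat m)^2)"
  proof -
    fix k j k' j' assume kk: "k \<in> K" "k' \<in> K" "j < m" "j' < m"
    let ?z = "inner_F m (B k j) (B k' j')"
    have "(\<Sum>x\<in>D. u (k,j) x * cnj (u (k',j') x)) = ?z * ?z"
      unfolding D_def u_def inner_F_def sum_times by (simp add: sum_product mult_ac)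
    then have "(\<Sum>x\<in>D. u (k,j) x * cnj (u (k',j') x)) * cnj (\<Sum>x\<in>D. u (k,j) x * cnj (u (k',j') x))
       = (?z * cnj ?z)^2" by (simp add: power2_eq_square mult_ac)
    also have "\<dots> = (complex_of_real ((cmod ?z)\<^sup>2))^2" by (simp only: complex_norm_square)
    also have "\<dots> = (if k = k' then (if j = j' then 1 else 0) else 1 / (of_nat m)^2)"
    proof (cases "k = k'")
      case True
      then have "?z = (if j = j' then 1 else 0)" using onb_inner[OF onb[OF kk(1)] kk(3,4)]
        unfolding inner_F_def by simp
      then show ?thesis using True by simp
    next
      case False
      then show ?thesis using mu[OF kk(1,2) False kk(3,4)] by (simp add: power_divide)
    qed
    finally show "(\<Sum>x\<in>D. u (k,j) x * cnj (u (k',j') x)) * cnj (\<Sum>x\<in>D. u (k,j) x * cnj (u (k',j') x))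
      = (if k = k' then (if j = j' then 1 else 0) else 1 / (of_nat m)^2)" .
  qed
  have S1: "(\<Sum>i\<in>I. \<Sum>i'\<in>I. (\<Sum>x\<in>D. u i x * cnj (u i' x)) * cnj (\<Sum>x\<in>D. u i x * cnj (u i' x)))
     = of_nat (card K) * (of_nat m + of_nat (card K) - 1)"
  proof -
    have "(\<Sum>i\<in>I. \<Sum>i'\<in>I. (\<Sum>x\<in>D. u i x * cnj (u i' x)) * cnj (\<Sum>x\<in>D. u i x * cnj (u i' x)))
      = (\<Sum>k\<in>K. \<Sum>j<m. \<Sum>k'\<in>K. \<Sum>j'<m. (if k = k' then (if j = j' then 1 else 0) else 1 / (of_nat m)^2))"
      unfolding I_def sum_times by (intro sum.cong refl, rule ipval; simp)
    also have "\<dots> = (\<Sum>k\<in>K. \<Sum>j<m. \<Sum>k'\<in>K. (if k = k' then 1 else 1 / of_nat m))"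
      using m by (intro sum.cong refl) (auto simp: power2_eq_square)
    also have "\<dots> = (\<Sum>k\<in>K. \<Sum>j<m. 1 + of_nat (card K - 1) * (1 / of_nat m))"
      using fin by (intro sum.cong refl sum_if_eq_other) auto
    also have "\<dots> = of_nat (card K) * (of_nat m + of_nat (card K) - 1)"
    proof -
      have "card K > 0" using cK unfolding kF_def by auto
      then show ?thesis using m by (simp add: field_simps of_nat_diff)
    qed
    finally show ?thesis .
  qed
  have qv: "\<And>k j. k \<in> K \<Longrightarrow> j < m \<Longrightarrow> (\<Sum>x\<in>D. \<Sum>y\<in>D. cnj (u (k,j) x) * Rp x y * u (k,j) y) = 2 * ?\<alpha> + ?\<gamma>"
  proof -
    fix k j assume kj: "k \<in> K" "j < m"
    have n: "(\<Sum>a<m. B k j a * cnj (B k j a)) = 1" using onb_inner[OF onb[OF kj(1)] kj(2) kj(2)] by simp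
    have r: "?\<gamma> \<noteq> 0 \<Longrightarrow> \<forall>a<m. cnj (B k j a) = B k j a"
      using onb[OF kj(1)] kj(2) unfolding c\<gamma>_def orthonormal_basis_def in_F_def
      by (auto simp: Reals_cnj_iff split: if_splits)
    have "(\<Sum>x\<in>D. \<Sum>y\<in>D. cnj (u (k,j) x) * Rp x y * u (k,j) y)
       = (\<Sum>a<m. \<Sum>b<m. \<Sum>c<m. \<Sum>d<m. cnj (B k j a * B k j b) * Rg ?\<alpha> ?\<alpha> ?\<gamma> a b c d * (B k j c * B k j d))"
      unfolding D_def sum_times u_def Rp_def by simp
    also have "\<dots> = 2 * ?\<alpha> + ?\<gamma>" using Rg_q[OF n r] by simp
    finally show "(\<Sum>x\<in>D. \<Sum>y\<in>D. cnj (u (k,j) x) * Rp x y * u (k,j) y) = 2 * ?\<alpha> + ?\<gamma>" .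
  qed
  have S2: "(\<Sum>i\<in>I. \<Sum>x\<in>D. \<Sum>y\<in>D. cnj (u i x) * Rp x y * u i y) = of_nat (card K) * of_nat m * (2 * ?\<alpha> + ?\<gamma>)"
  proof -
    have "(\<Sum>i\<in>I. \<Sum>x\<in>D. \<Sum>y\<in>D. cnj (u i x) * Rp x y * u i y) = (\<Sum>k\<in>K. \<Sum>j<m. 2 * ?\<alpha> + ?\<gamma>)"
      unfolding I_def sum_times by (intro sum.cong refl, rule qv; simp)
    then show ?thesis by simp
  qed
  have S3: "(\<Sum>x\<in>D. \<Sum>y\<in>D. Rp x y * cnj (Rp x y))
     = of_nat m ^2 * (?\<alpha> * cnj ?\<alpha> + ?\<alpha> * cnj ?\<alpha> + ?\<gamma> * cnj ?\<gamma>) + of_nat m * (?\<alpha> * cnj ?\<alpha> + ?\<alpha> * cnj ?\<alpha> + ?\<alpha> * cnj ?\<gamma> + ?\<gamma> * cnj ?\<alpha> + ?\<alpha> * cnj ?\<gamma> + ?\<gamma> * cnj ?\<alpha>)"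
    unfolding D_def sum_times Rp_def using Rg_sq by simp
  have zero: "(\<Sum>x\<in>D. \<Sum>y\<in>D. ((\<Sum>i\<in>I. u i x * cnj (u i y)) - Rp x y) * cnj ((\<Sum>i\<in>I. u i x * cnj (u i y)) - Rp x y)) = 0"
    unfolding gram_expand S1 S2 S3
  proof (cases realF)
    case True
    then obtain t where t: "m = 2 * t" using m by auto
    have "card K = t + 1" using cK True t unfolding kF_def by simp
    then show "of_nat (card K) * (of_nat m + of_nat (card K) - 1) - of_nat (card K) * of_nat m * (2 * ?\<alpha> + ?\<gamma>) -
    cnj (of_nat (card K) * of_nat m * (2 * ?\<alpha> + ?\<gamma>)) +
    ((of_nat m)\<^sup>2 * (?\<alpha> * cnj ?\<alpha> + ?\<alpha> * cnj ?\<alpha> + ?\<gamma> * cnj ?\<gamma>) +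
     of_nat m * (?\<alpha> * cnj ?\<alpha> + ?\<alpha> * cnj ?\<alpha> + ?\<alpha> * cnj ?\<gamma> + ?\<gamma> * cnj ?\<alpha> + ?\<alpha> * cnj ?\<gamma> + ?\<gamma> * cnj ?\<alpha>)) = 0"
      using True t by (simp add: c\<alpha>_def c\<gamma>_def field_simps power2_eq_square)
  next
    case False
    have "card K = m + 1" using cK False unfolding kF_def by simp
    then show "of_nat (card K) * (of_nat m + of_nat (card K) - 1) - of_nat (card K) * of_nat m * (2 * ?\<alpha> + ?\<gamma>) -
    cnj (of_nat (card K) * of_nat m * (2 * ?\<alpha> + ?\<gamma>)) +
    ((of_nat m)\<^sup>2 * (?\<alpha> * cnj ?\<alpha> + ?\<alpha> * cnj ?\<alpha> + ?\<gamma> * cnj ?\<gamma>) +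
     of_nat m * (?\<alpha> * cnj ?\<alpha> + ?\<alpha> * cnj ?\<alpha> + ?\<alpha> * cnj ?\<gamma> + ?\<gamma> * cnj ?\<alpha> + ?\<alpha> * cnj ?\<gamma> + ?\<gamma> * cnj ?\<alpha>)) = 0"
      using False by (simp add: c\<alpha>_def c\<gamma>_def field_simps power2_eq_square)
  qed
  have "(a,b) \<in> D" "(c,d) \<in> D" using abcd unfolding D_def by auto
  from sumsq_zero_imp[OF finI(2) zero this]
  have "(\<Sum>i\<in>I. u i (a,b) * cnj (u i (c,d))) = Rp (a,b) (c,d)" .
  then show ?thesis unfolding I_def sum_times u_def Rp_def by (simp add: mult_ac)
qed

lemma swap_in4:
  "(\<Sum>i\<in>I. \<Sum>a\<in>A. \<Sum>b\<in>B. \<Sum>c\<in>C. \<Sum>d\<in>D. f i a b c d) = (\<Sum>a\<in>A. \<Sum>b\<in>B. \<Sum>c\<in>C. \<Sum>d\<in>D. \<Sum>i\<in>I. f i a b c d)"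
proof -
  have "(\<Sum>i\<in>I. \<Sum>a\<in>A. \<Sum>b\<in>B. \<Sum>c\<in>C. \<Sum>d\<in>D. f i a b c d) = (\<Sum>a\<in>A. \<Sum>i\<in>I. \<Sum>b\<in>B. \<Sum>c\<in>C. \<Sum>d\<in>D. f i a b c d)"
    by (rule sum.swap)
  also have "\<dots> = (\<Sum>a\<in>A. \<Sum>b\<in>B. \<Sum>i\<in>I. \<Sum>c\<in>C. \<Sum>d\<in>D. f i a b c d)"
    by (rule sum.cong[OF refl], rule sum.swap)
  also have "\<dots> = (\<Sum>a\<in>A. \<Sum>b\<in>B. \<Sum>c\<in>C. \<Sum>i\<in>I. \<Sum>d\<in>D. f i a b c d)"
    by (rule sum.cong[OF refl], rule sum.cong[OF refl], rule sum.swap)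
  also have "\<dots> = (\<Sum>a\<in>A. \<Sum>b\<in>B. \<Sum>c\<in>C. \<Sum>d\<in>D. \<Sum>i\<in>I. f i a b c d)"
    by (rule sum.cong[OF refl], rule sum.cong[OF refl], rule sum.cong[OF refl], rule sum.swap)
  finally show ?thesis .
qed

lemma conj_tensor_sum:
  "(\<Sum>i\<in>I. tensor (conj_by m U (P i)) (conj_by m U (P i)) (a,b) (c,d))
   = (\<Sum>a'<m. \<Sum>b'<m. \<Sum>c'<m. \<Sum>d'<m. (U a a' * cnj (U c c') * U b b' * cnj (U d d')) * (\<Sum>i\<in>I. P i a' c' * P i b' d'))"
proof -
  have "\<And>i. tensor (conj_by m U (P i)) (conj_by m U (P i)) (a,b) (c,d)
     = (\<Sum>a'<m. \<Sum>b'<m. \<Sum>c'<m. \<Sum>d'<m. (U a a' * cnj (U c c') * U b b' * cnj (U d d')) * (P i a' c' * P i b' d'))"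
    unfolding tensor_def conj_by_def
    by (simp only: split sum_product) (intro sum.cong refl, simp add: mult_ac)
  then have "(\<Sum>i\<in>I. tensor (conj_by m U (P i)) (conj_by m U (P i)) (a,b) (c,d))
     = (\<Sum>i\<in>I. \<Sum>a'<m. \<Sum>b'<m. \<Sum>c'<m. \<Sum>d'<m. (U a a' * cnj (U c c') * U b b' * cnj (U d d')) * (P i a' c' * P i b' d'))"
    by simp
  also have "\<dots> = (\<Sum>a'<m. \<Sum>b'<m. \<Sum>c'<m. \<Sum>d'<m. \<Sum>i\<in>I. (U a a' * cnj (U c c') * U b b' * cnj (U d d')) * (P i a' c' * P i b' d'))"
    by (rule swap_in4)
  also have "\<dots> = (\<Sum>a'<m. \<Sum>b'<m. \<Sum>c'<m. \<Sum>d'<m. (U a a' * cnj (U c c') * U b b' * cnj (U d d')) * (\<Sum>i\<in>I. P i a' c' * P i b' d'))"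
    by (simp only: sum_distrib_left)
  finally show ?thesis .
qed

lemma Rg_invariant:
  assumes U: "unitary_F realF m U" and g: "\<gamma> \<noteq> 0 \<Longrightarrow> realF"
    and abcd: "a < m" "b < m" "c < m" "d < m"
  shows "(\<Sum>a'<m. \<Sum>b'<m. \<Sum>c'<m. \<Sum>d'<m. (U a a' * cnj (U c c') * U b b' * cnj (U d d')) * Rg \<alpha> \<beta> \<gamma> a' b' c' d')
     = Rg \<alpha> \<beta> \<gamma> a b c d"
proof -
  have un: "\<And>i j. i < m \<Longrightarrow> j < m \<Longrightarrow> (\<Sum>k<m. U i k * cnj (U j k)) = (if i = j then 1 else 0)"
    using U unfolding unitary_F_def by blast
  have e: "(\<Sum>a'<m. \<Sum>b'<m. \<Sum>c'<m. \<Sum>d'<m. (U a a' * cnj (U c c') * U b b' * cnj (U d d')) * Rg \<alpha> \<beta> \<gamma> a' b' c' d')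
     = \<alpha> * ((\<Sum>k<m. U a k * cnj (U c k)) * (\<Sum>k<m. U b k * cnj (U d k)))
     + \<beta> * ((\<Sum>k<m. U a k * cnj (U d k)) * (\<Sum>k<m. U b k * cnj (U c k)))
     + \<gamma> * ((\<Sum>k<m. U a k * U b k) * (\<Sum>k<m. cnj (U c k) * cnj (U d k)))"
  proof -
    have "(\<Sum>a'<m. \<Sum>b'<m. \<Sum>c'<m. \<Sum>d'<m. (U a a' * cnj (U c c') * U b b' * cnj (U d d')) * Rg \<alpha> \<beta> \<gamma> a' b' c' d')
     = \<alpha> * (\<Sum>a'<m. \<Sum>b'<m. (U a a' * cnj (U c a')) * (U b b' * cnj (U d b')))
     + \<beta> * (\<Sum>a'<m. \<Sum>b'<m. (U a a' * cnj (U d a')) * (U b b' * cnj (U c b')))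
     + \<gamma> * (\<Sum>a'<m. \<Sum>c'<m. (U a a' * U b a') * (cnj (U c c') * cnj (U d c')))"
      unfolding Rg_def by (simp add: algebra_simps sum.distrib delta_simps sum_distrib_left)
    then show ?thesis by (simp only: sum_product)
  qed
  have g3: "\<gamma> * ((\<Sum>k<m. U a k * U b k) * (\<Sum>k<m. cnj (U c k) * cnj (U d k)))
     = \<gamma> * ((if a = b then 1 else 0) * (if c = d then 1 else 0))"
  proof (cases "\<gamma> = 0")
    case False
    then have "realF" by (rule g)
    then have r: "\<And>i k. i < m \<Longrightarrow> k < m \<Longrightarrow> cnj (U i k) = U i k"
      using U unfolding unitary_F_def mat_in_F_def by (auto simp: Reals_cnj_iff)
    have "(\<Sum>k<m. U a k * U b k) = (\<Sum>k<m. U a k * cnj (U b k))" using r abcd by (intro sum.cong) auto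
    moreover have "(\<Sum>k<m. cnj (U c k) * cnj (U d k)) = (\<Sum>k<m. U c k * cnj (U d k))" using r abcd by (intro sum.cong) auto
    ultimately show ?thesis using un abcd by simp
  qed simp
  show ?thesis unfolding e g3 using un abcd unfolding Rg_def by simp
qed

lemma coord_proj_restrict:
  assumes "J \<subseteq> {..<m}"
  shows "coord_proj b J a c = (\<Sum>j<m. if j \<in> J then b j a * cnj (b j c) else 0)"
proof -
  have "J = {..<m} \<inter> J" using assms by blast
  then have "coord_proj b J a c = (\<Sum>j\<in>{..<m} \<inter> J. b j a * cnj (b j c))"
    unfolding coord_proj_def by simp
  also have "\<dots> = (\<Sum>j<m. if j \<in> J then b j a * cnj (b j c) else 0)"
    by (simp add: sum.inter_restrict)
  finally show ?thesis .
qed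

lemma sum_indicator_card:
  assumes "finite S"
  shows "(\<Sum>J\<in>S. if P J then (X::complex) else 0) = of_nat (card {J\<in>S. P J}) * X"
proof -
  have "(\<Sum>J\<in>S. if P J then X else 0) = (\<Sum>J\<in>{J\<in>S. P J}. X)"
    using sum.inter_filter[OF assms, of "\<lambda>_. X" P] by simp
  then show ?thesis by simp
qed

lemma block_sum:
  assumes finS: "finite S" and SJ: "\<forall>J\<in>S. J \<subseteq> {..<m}"
  shows "(\<Sum>J\<in>S. coord_proj b J a c * coord_proj b J a' c')
    = (\<Sum>j<m. \<Sum>j'<m. of_nat (card {J\<in>S. j \<in> J \<and> j' \<in> J}) * (b j a * cnj (b j c) * (b j' a' * cnj (b j' c'))))"
proof -
  have "(\<Sum>J\<in>S. coord_proj b J a c * coord_proj b J a' c')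
     = (\<Sum>J\<in>S. \<Sum>j<m. \<Sum>j'<m. if j \<in> J \<and> j' \<in> J then b j a * cnj (b j c) * (b j' a' * cnj (b j' c')) else 0)"
  proof (rule sum.cong[OF refl])
    fix J assume "J \<in> S"
    then have J: "J \<subseteq> {..<m}" using SJ by blast
    show "coord_proj b J a c * coord_proj b J a' c' = (\<Sum>j<m. \<Sum>j'<m. if j \<in> J \<and> j' \<in> J then b j a * cnj (b j c) * (b j' a' * cnj (b j' c')) else 0)"
      unfolding coord_proj_restrict[OF J] sum_product by (intro sum.cong refl) simp
  qed
  also have "\<dots> = (\<Sum>j<m. \<Sum>j'<m. \<Sum>J\<in>S. if j \<in> J \<and> j' \<in> J then b j a * cnj (b j c) * (b j' a' * cnj (b j' c')) else 0)"
    by (simp only: swap3[symmetric])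
  also have "\<dots> = (\<Sum>j<m. \<Sum>j'<m. of_nat (card {J\<in>S. j \<in> J \<and> j' \<in> J}) * (b j a * cnj (b j c) * (b j' a' * cnj (b j' c'))))"
    using finS by (simp only: sum_indicator_card)
  finally show ?thesis .
qed

lemma design_if:
  fixes B :: "'k \<Rightarrow> nat \<Rightarrow> cvec"
  assumes MUB: "MUB_set realF m K B" and fin: "finite K" and cK: "card K = kF realF m"
    and m: "0 < m" "even m" and finS: "finite S" and SJ: "\<forall>J\<in>S. J \<subseteq> {..<m}"
    and n: "\<forall>j<m. \<forall>j'<m. card {J\<in>S. j \<in> J \<and> j' \<in> J} = (if j = j' then m - 1 else m div 2 - 1)"
    and abcd: "a < m" "b < m" "c < m" "d < m"
  shows "(\<Sum>i\<in>K \<times> S. tensor ((\<lambda>(k, J). coord_proj (B k) J) i) ((\<lambda>(k, J). coord_proj (B k) J) i) (a, b) (c, d))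
    = Rg (of_nat (card K) * of_nat (m div 2 - 1) + (of_nat (m - 1) - of_nat (m div 2 - 1)) * c\<alpha> realF)
         ((of_nat (m - 1) - of_nat (m div 2 - 1)) * c\<alpha> realF) ((of_nat (m - 1) - of_nat (m div 2 - 1)) * c\<gamma> realF) a b c d"
proof -
  let ?l = "of_nat (m div 2 - 1) :: complex" and ?r = "of_nat (m - 1) :: complex"
  have onb: "\<And>k. k \<in> K \<Longrightarrow> orthonormal_basis realF m (B k)"
    using MUB unfolding MUB_set_def by blast
  have inner: "\<And>k. k \<in> K \<Longrightarrow> (\<Sum>J\<in>S. coord_proj (B k) J a c * coord_proj (B k) J b d)
     = ?l * ((if a = c then 1 else 0) * (if b = d then 1 else 0)) + (?r - ?l) * (\<Sum>j<m. B k j a * cnj (B k j c) * (B k j b * cnj (B k j d)))"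
  proof -
    fix k assume k: "k \<in> K"
    let ?Q = "\<lambda>j j'. B k j a * cnj (B k j c) * (B k j' b * cnj (B k j' d))"
    have "(\<Sum>J\<in>S. coord_proj (B k) J a c * coord_proj (B k) J b d)
        = (\<Sum>j<m. \<Sum>j'<m. of_nat (card {J\<in>S. j \<in> J \<and> j' \<in> J}) * ?Q j j')"
      by (rule block_sum[OF finS SJ])
    also have "\<dots> = (\<Sum>j<m. \<Sum>j'<m. ?l * ?Q j j' + (if j = j' then (?r - ?l) * ?Q j j' else 0))"
      using n by (intro sum.cong refl) (auto simp: algebra_simps)
    also have "\<dots> = ?l * (\<Sum>j<m. \<Sum>j'<m. ?Q j j') + (?r - ?l) * (\<Sum>j<m. ?Q j j)"
      by (simp add: sum.distrib sum_distrib_left)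
    also have "(\<Sum>j<m. \<Sum>j'<m. ?Q j j') = (\<Sum>j<m. B k j a * cnj (B k j c)) * (\<Sum>j<m. B k j b * cnj (B k j d))"
      by (simp add: sum_product)
    also have "\<dots> = (if a = c then 1 else 0) * (if b = d then 1 else 0)"
      using onb_complete[OF onb[OF k]] abcd by simp
    finally show "(\<Sum>J\<in>S. coord_proj (B k) J a c * coord_proj (B k) J b d)
     = ?l * ((if a = c then 1 else 0) * (if b = d then 1 else 0)) + (?r - ?l) * (\<Sum>j<m. B k j a * cnj (B k j c) * (B k j b * cnj (B k j d)))" .
  qed
  have "(\<Sum>i\<in>K \<times> S. tensor ((\<lambda>(k, J). coord_proj (B k) J) i) ((\<lambda>(k, J). coord_proj (B k) J) i) (a, b) (c, d))
     = (\<Sum>k\<in>K. \<Sum>J\<in>S. coord_proj (B k) J a c * coord_proj (B k) J b d)"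
    unfolding sum_times tensor_def by simp
  also have "\<dots> = (\<Sum>k\<in>K. ?l * ((if a = c then 1 else 0) * (if b = d then 1 else 0)) + (?r - ?l) * (\<Sum>j<m. B k j a * cnj (B k j c) * (B k j b * cnj (B k j d))))"
    using inner by (rule sum.cong[OF refl])
  also have "\<dots> = of_nat (card K) * ?l * ((if a = c then 1 else 0) * (if b = d then 1 else 0)) + (?r - ?l) * (\<Sum>k\<in>K. \<Sum>j<m. B k j a * cnj (B k j c) * (B k j b * cnj (B k j d)))"
    by (simp add: sum.distrib sum_distrib_left)
  also have "\<dots> = of_nat (card K) * ?l * ((if a = c then 1 else 0) * (if b = d then 1 else 0)) + (?r - ?l) * Rg (c\<alpha> realF) (c\<alpha> realF) (c\<gamma> realF) a b c d"
    using mub_design[OF MUB fin cK m abcd] by simp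
  also have "\<dots> = Rg (of_nat (card K) * ?l + (?r - ?l) * c\<alpha> realF) ((?r - ?l) * c\<alpha> realF) ((?r - ?l) * c\<gamma> realF) a b c d"
    unfolding Rg_def by (simp add: algebra_simps)
  finally show ?thesis .
qed

definition qf :: "nat \<Rightarrow> cmat \<Rightarrow> cvec \<Rightarrow> complex" where
  "qf m A x = (\<Sum>a<m. \<Sum>c<m. cnj (x a) * A a c * x c)"

lemma qf_tensor:
  "(\<Sum>a<m. \<Sum>b<m. \<Sum>c<m. \<Sum>d<m. (cnj (x a) * cnj (y b) * x c * y d) * (\<Sum>i\<in>I. tensor (A i) (A i) (a,b) (c,d)))
   = (\<Sum>i\<in>I. qf m (A i) x * qf m (A i) y)"
proof -
  have "(\<Sum>a<m. \<Sum>b<m. \<Sum>c<m. \<Sum>d<m. (cnj (x a) * cnj (y b) * x c * y d) * (\<Sum>i\<in>I. tensor (A i) (A i) (a,b) (c,d)))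
     = (\<Sum>a<m. \<Sum>b<m. \<Sum>c<m. \<Sum>d<m. \<Sum>i\<in>I. (cnj (x a) * cnj (y b) * x c * y d) * tensor (A i) (A i) (a,b) (c,d))"
    by (simp only: sum_distrib_left)
  also have "\<dots> = (\<Sum>i\<in>I. \<Sum>a<m. \<Sum>b<m. \<Sum>c<m. \<Sum>d<m. (cnj (x a) * cnj (y b) * x c * y d) * tensor (A i) (A i) (a,b) (c,d))"
    by (rule swap_in4[symmetric])
  also have "\<dots> = (\<Sum>i\<in>I. qf m (A i) x * qf m (A i) y)"
    unfolding qf_def tensor_def by (simp only: split sum_product) (intro sum.cong refl, simp add: mult_ac)
  finally show ?thesis .
qed

lemma qf_conj:
  "qf m (conj_by m U P) x = qf m P (\<lambda>a'. \<Sum>c<m. cnj (U c a') * x c)"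
proof -
  have "qf m (conj_by m U P) x = (\<Sum>a<m. \<Sum>c<m. \<Sum>a'<m. \<Sum>c'<m. cnj (x a) * U a a' * P a' c' * cnj (U c c') * x c)"
    unfolding qf_def conj_by_def by (simp add: sum_distrib_left sum_distrib_right mult_ac)
  also have "\<dots> = (\<Sum>a'<m. \<Sum>c'<m. \<Sum>a<m. \<Sum>c<m. cnj (x a) * U a a' * P a' c' * cnj (U c c') * x c)"
    by (rule swap4)
  also have "\<dots> = qf m P (\<lambda>a'. \<Sum>c<m. cnj (U c a') * x c)"
    unfolding qf_def by (simp add: sum_distrib_left sum_distrib_right mult_ac)
  finally show ?thesis .
qed

lemma qf_cong:
  assumes "\<forall>a<m. x a = y a"
  shows "qf m P x = qf m P y"
  using assms unfolding qf_def by simp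

lemma qf_coord:
  "qf m (coord_proj b J) v = (\<Sum>j\<in>J. complex_of_real ((cmod (inner_F m (b j) v))\<^sup>2))"
proof -
  have "qf m (coord_proj b J) v = (\<Sum>j\<in>J. (\<Sum>c<m. v c * cnj (b j c)) * cnj (\<Sum>c<m. v c * cnj (b j c)))"
    unfolding qf_def coord_proj_def
    by (simp add: sum_distrib_left sum_distrib_right sum_product mult_ac sum.swap[of _ J])
  also have "\<dots> = (\<Sum>j\<in>J. complex_of_real ((cmod (inner_F m (b j) v))\<^sup>2))"
  proof (rule sum.cong[OF refl])
    fix j
    have "inner_F m (b j) v = cnj (\<Sum>c<m. v c * cnj (b j c))" unfolding inner_F_def by (simp add: mult.commute)
    then show "(\<Sum>c<m. v c * cnj (b j c)) * cnj (\<Sum>c<m. v c * cnj (b j c)) = complex_of_real ((cmod (inner_F m (b j) v))\<^sup>2)"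
      by (simp only: complex_norm_square complex_mod_cnj)
  qed
  finally show ?thesis .
qed

definition tp :: "nat \<Rightarrow> nat \<Rightarrow> nat \<Rightarrow> nat" where
  "tp j0 j1 x = (if x = j0 then j1 else if x = j1 then j0 else x)"

definition permU :: "nat \<Rightarrow> (nat \<Rightarrow> cvec) \<Rightarrow> (nat \<Rightarrow> nat) \<Rightarrow> cmat" where
  "permU m b p = (\<lambda>a c. \<Sum>i<m. b (p i) a * cnj (b i c))"

lemma tp_simps: "tp j0 j1 (tp j0 j1 x) = x" "x < m \<Longrightarrow> j0 < m \<Longrightarrow> j1 < m \<Longrightarrow> tp j0 j1 x < m"
  unfolding tp_def by auto

lemma permU_unitary:
  assumes onb: "orthonormal_basis realF m b" and j: "j0 < m" "j1 < m"
  shows "unitary_F realF m (permU m b (tp j0 j1))"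
proof -
  let ?p = "tp j0 j1"
  have real: "realF \<Longrightarrow> \<forall>i<m. \<forall>x<m. b i x \<in> \<real>" using onb unfolding orthonormal_basis_def in_F_def by blast
  have minF: "mat_in_F realF m (permU m b ?p)"
    unfolding mat_in_F_def permU_def
  proof (intro impI allI)
    fix i j assume r: realF and "i < m" "j < m"
    show "(\<Sum>k<m. b (?p k) i * cnj (b k j)) \<in> \<real>"
      using real[OF r] \<open>i < m\<close> \<open>j < m\<close> tp_simps(2)[OF _ j]
      by (intro sum_in_Reals) (auto simp: Reals_cnj_iff)
  qed
  have rows: "\<And>i j. i < m \<Longrightarrow> j < m \<Longrightarrow> (\<Sum>k<m. permU m b ?p i k * cnj (permU m b ?p j k)) = (if i = j then 1 else 0)"
  proof -
    fix i j assume ij: "i < m" "j < m"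
    have "(\<Sum>k<m. permU m b ?p i k * cnj (permU m b ?p j k))
       = (\<Sum>k<m. \<Sum>i1<m. \<Sum>i2<m. b (?p i2) i * cnj (b (?p i1) j) * (b i1 k * cnj (b i2 k)))"
      unfolding permU_def by (simp add: sum_product mult_ac)
    also have "\<dots> = (\<Sum>i1<m. \<Sum>i2<m. \<Sum>k<m. b (?p i2) i * cnj (b (?p i1) j) * (b i1 k * cnj (b i2 k)))"
      by (rule swap3[symmetric])
    also have "\<dots> = (\<Sum>i1<m. \<Sum>i2<m. b (?p i2) i * cnj (b (?p i1) j) * (if i1 = i2 then 1 else 0))"
      by (intro sum.cong refl) (simp add: sum_distrib_left[symmetric] onb_inner[OF onb])
    also have "\<dots> = (\<Sum>i1<m. b (?p i1) i * cnj (b (?p i1) j))"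
      by (simp add: delta_simps)
    also have "\<dots> = (\<Sum>i1<m. b i1 i * cnj (b i1 j))"
      by (rule sum.reindex_bij_witness[where i = ?p and j = ?p]) (auto simp: tp_simps j)
    also have "\<dots> = (if i = j then 1 else 0)" by (rule onb_complete[OF onb ij])
    finally show "(\<Sum>k<m. permU m b ?p i k * cnj (permU m b ?p j k)) = (if i = j then 1 else 0)" .
  qed
  show ?thesis unfolding unitary_F_def using minF rows by blast
qed

lemma permU_adj:
  assumes onb: "orthonormal_basis realF m b" and j: "j0 < m" "j1 < m" and x: "x < m" and a: "a' < m"
  shows "(\<Sum>c<m. cnj (permU m b (tp j0 j1) c a') * b x c) = b (tp j0 j1 x) a'"
proof -
  let ?p = "tp j0 j1"
  have "(\<Sum>c<m. cnj (permU m b ?p c a') * b x c) = (\<Sum>c<m. \<Sum>i<m. b i a' * (b x c * cnj (b (?p i) c)))"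
    unfolding permU_def by (simp add: sum_distrib_left sum_distrib_right mult_ac)
  also have "\<dots> = (\<Sum>i<m. \<Sum>c<m. b i a' * (b x c * cnj (b (?p i) c)))"
    by (rule sum.swap)
  also have "\<dots> = (\<Sum>i<m. b i a' * (if x = ?p i then 1 else 0))"
    using tp_simps(2)[OF _ j] x by (intro sum.cong refl) (simp add: sum_distrib_left[symmetric] onb_inner[OF onb])
  also have "\<dots> = (\<Sum>i<m. if i = ?p x then b i a' else 0)"
    by (intro sum.cong refl) (auto simp: tp_def)
  also have "\<dots> = b (?p x) a'" using tp_simps(2)[OF x j] by simp
  finally show ?thesis .
qed

lemma qf_value:
  fixes B :: "'k \<Rightarrow> nat \<Rightarrow> cvec"
  assumes MUB: "MUB_set realF m K B" and k0: "k0 \<in> K" and k: "k \<in> K" and J: "J \<subseteq> {..<m}" and x: "x < m"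
  shows "qf m (coord_proj (B k) J) (B k0 x) = (if k = k0 then (if x \<in> J then 1 else 0) else of_nat (card J) / of_nat m)"
proof -
  have onb: "orthonormal_basis realF m (B k0)" using MUB k0 unfolding MUB_set_def by blast
  show ?thesis
  proof (cases "k = k0")
    case True
    have "qf m (coord_proj (B k) J) (B k0 x) = (\<Sum>j\<in>J. if j = x then 1 else 0)"
      unfolding qf_coord True
    proof (rule sum.cong[OF refl])
      fix j assume "j \<in> J"
      then have "j < m" using J by auto
      then have "inner_F m (B k0 j) (B k0 x) = (if j = x then 1 else 0)"
        using onb_inner[OF onb _ x] unfolding inner_F_def by simp
      then show "complex_of_real ((cmod (inner_F m (B k0 j) (B k0 x)))\<^sup>2) = (if j = x then 1 else 0)" by simp
    qed
    also have "\<dots> = (if x \<in> J then 1 else 0)"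
      using J by (simp add: finite_subset)
    finally show ?thesis using True by simp
  next
    case False
    have "qf m (coord_proj (B k) J) (B k0 x) = (\<Sum>j\<in>J. 1 / of_nat m)"
      unfolding qf_coord
    proof (rule sum.cong[OF refl])
      fix j assume "j \<in> J"
      then have "j < m" using J by auto
      then have "(cmod (inner_F m (B k j) (B k0 x)))\<^sup>2 = 1 / real m"
        using MUB k k0 False x unfolding MUB_set_def mutually_unbiased_def by blast
      then show "complex_of_real ((cmod (inner_F m (B k j) (B k0 x)))\<^sup>2) = 1 / of_nat m" by simp
    qed
    then show ?thesis using False by simp
  qed
qed

lemma F_value:
  fixes B :: "'k \<Rightarrow> nat \<Rightarrow> cvec"
  assumes MUB: "MUB_set realF m K B" and fin: "finite K" and k0: "k0 \<in> K" and finS: "finite S"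
    and SJ: "\<forall>J\<in>S. J \<subseteq> {..<m}" and x: "x < m" and y: "y < m"
  shows "(\<Sum>i\<in>K \<times> S. qf m ((\<lambda>(k, J). coord_proj (B k) J) i) (B k0 x) * qf m ((\<lambda>(k, J). coord_proj (B k) J) i) (B k0 y))
    = of_nat (card {J\<in>S. x \<in> J \<and> y \<in> J}) + (\<Sum>k\<in>K - {k0}. \<Sum>J\<in>S. (of_nat (card J) / of_nat m)^2)"
proof -
  have "(\<Sum>i\<in>K \<times> S. qf m ((\<lambda>(k, J). coord_proj (B k) J) i) (B k0 x) * qf m ((\<lambda>(k, J). coord_proj (B k) J) i) (B k0 y))
     = (\<Sum>k\<in>K. \<Sum>J\<in>S. (if k = k0 then (if x \<in> J \<and> y \<in> J then 1 else 0) else (of_nat (card J) / of_nat m)^2))"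
    unfolding sum_times
    by (intro sum.cong refl) (simp add: qf_value[OF MUB k0 _ _ x] qf_value[OF MUB k0 _ _ y] SJ power2_eq_square)
  also have "\<dots> = (\<Sum>J\<in>S. (if x \<in> J \<and> y \<in> J then 1 else 0)) + (\<Sum>k\<in>K - {k0}. \<Sum>J\<in>S. (of_nat (card J) / of_nat m)^2)"
    using fin k0 by (simp add: sum.remove)
  also have "(\<Sum>J\<in>S. (if x \<in> J \<and> y \<in> J then 1 else 0)) = (of_nat (card {J\<in>S. x \<in> J \<and> y \<in> J}) :: complex)"
    using sum_indicator_card[OF finS, of "\<lambda>J. x \<in> J \<and> y \<in> J" 1] by simp
  finally show ?thesis .
qed

lemma design_swap:
  fixes B :: "'k \<Rightarrow> nat \<Rightarrow> cvec"
  assumes MUB: "MUB_set realF m K B" and fin: "finite K" and k0: "k0 \<in> K" and finS: "finite S"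
    and SJ: "\<forall>J\<in>S. J \<subseteq> {..<m}"
    and G: "grassmannian_2_design realF m (K \<times> S) (\<lambda>(k, J). coord_proj (B k) J)"
    and x: "x < m" and y: "y < m" and j: "j0 < m" "j1 < m"
  shows "card {J\<in>S. x \<in> J \<and> y \<in> J} = card {J\<in>S. tp j0 j1 x \<in> J \<and> tp j0 j1 y \<in> J}"
proof -
  let ?P = "\<lambda>i. (\<lambda>(k, J). coord_proj (B k) J) i"
  let ?U = "permU m (B k0) (tp j0 j1)"
  have onb: "orthonormal_basis realF m (B k0)" using MUB k0 unfolding MUB_set_def by blast
  have U: "unitary_F realF m ?U" by (rule permU_unitary[OF onb j])
  have eq: "\<And>a b c d. a < m \<Longrightarrow> b < m \<Longrightarrow> c < m \<Longrightarrow> d < m \<Longrightarrow>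
      (\<Sum>i\<in>K \<times> S. tensor (?P i) (?P i) (a, b) (c, d)) = (\<Sum>i\<in>K \<times> S. tensor (conj_by m ?U (?P i)) (conj_by m ?U (?P i)) (a, b) (c, d))"
    using G U unfolding grassmannian_2_design_def by blast
  let ?w = "\<lambda>a b c d. cnj (B k0 x a) * cnj (B k0 y b) * B k0 x c * B k0 y d"
  have "(\<Sum>i\<in>K \<times> S. qf m (?P i) (B k0 x) * qf m (?P i) (B k0 y))
     = (\<Sum>a<m. \<Sum>b<m. \<Sum>c<m. \<Sum>d<m. ?w a b c d * (\<Sum>i\<in>K \<times> S. tensor (?P i) (?P i) (a,b) (c,d)))"
    by (rule qf_tensor[symmetric])
  also have "\<dots> = (\<Sum>a<m. \<Sum>b<m. \<Sum>c<m. \<Sum>d<m. ?w a b c d * (\<Sum>i\<in>K \<times> S. tensor (conj_by m ?U (?P i)) (conj_by m ?U (?P i)) (a,b) (c,d)))"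
    by (intro sum.cong refl) (simp add: eq)
  also have "\<dots> = (\<Sum>i\<in>K \<times> S. qf m (conj_by m ?U (?P i)) (B k0 x) * qf m (conj_by m ?U (?P i)) (B k0 y))"
    by (rule qf_tensor)
  also have "\<dots> = (\<Sum>i\<in>K \<times> S. qf m (?P i) (B k0 (tp j0 j1 x)) * qf m (?P i) (B k0 (tp j0 j1 y)))"
  proof (rule sum.cong[OF refl])
    fix i
    have "qf m (conj_by m ?U (?P i)) (B k0 x) = qf m (?P i) (B k0 (tp j0 j1 x))"
      unfolding qf_conj by (rule qf_cong) (simp add: permU_adj[OF onb j x])
    moreover have "qf m (conj_by m ?U (?P i)) (B k0 y) = qf m (?P i) (B k0 (tp j0 j1 y))"
      unfolding qf_conj by (rule qf_cong) (simp add: permU_adj[OF onb j y])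
    ultimately show "qf m (conj_by m ?U (?P i)) (B k0 x) * qf m (conj_by m ?U (?P i)) (B k0 y)
       = qf m (?P i) (B k0 (tp j0 j1 x)) * qf m (?P i) (B k0 (tp j0 j1 y))" by simp
  qed
  finally have "(\<Sum>i\<in>K \<times> S. qf m (?P i) (B k0 x) * qf m (?P i) (B k0 y))
     = (\<Sum>i\<in>K \<times> S. qf m (?P i) (B k0 (tp j0 j1 x)) * qf m (?P i) (B k0 (tp j0 j1 y)))" .
  then have "(of_nat (card {J\<in>S. x \<in> J \<and> y \<in> J}) :: complex) = of_nat (card {J\<in>S. tp j0 j1 x \<in> J \<and> tp j0 j1 y \<in> J})"
    unfolding F_value[OF MUB fin k0 finS SJ x y] F_value[OF MUB fin k0 finS SJ tp_simps(2)[OF x j] tp_simps(2)[OF y j]]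
    by simp
  then show ?thesis by (simp only: of_nat_eq_iff)
qed

lemma cardS_calc:
  fixes t s :: nat
  assumes "t \<ge> 1" "kF realF (2*t) * s = 2 * dF realF (2*t)"
  shows "s = 2 * (2*t - 1)"
proof (cases realF)
  case True
  have "(2 * t + 2) * (2 * t - 1) = 2 * ((t+1) * (2*t - 1))" by simp
  then have "dF realF (2*t) = (t+1) * (2*t-1)" using True unfolding dF_def by simp
  moreover have "kF realF (2*t) = t + 1" using True unfolding kF_def by simp
  ultimately have "(t+1) * s = (t+1) * (2 * (2*t-1))" using assms(2) by (simp add: algebra_simps)
  then show ?thesis by (metis mult_cancel1 add_is_0 one_neq_zero)
next
  case False
  have "(2*t)^2 - 1 = (2*t+1) * (2*t-1)" using assms(1)
    by (simp add: power2_eq_square algebra_simps diff_mult_distrib2)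
  then have "dF realF (2*t) = (2*t+1) * (2*t-1)" using False unfolding dF_def by simp
  moreover have "kF realF (2*t) = 2*t + 1" using False unfolding kF_def by simp
  ultimately have "(2*t+1) * s = (2*t+1) * (2 * (2*t-1))" using assms(2) by (simp add: algebra_simps)
  then show ?thesis by (metis mult_cancel1 add_is_0 one_neq_zero)
qed

lemma lam_calc:
  fixes t c :: nat
  assumes "t \<ge> 1" "((2*t) choose 2) * c = (2 * (2*t - 1)) * (t choose 2)"
  shows "c = t - 1"
proof -
  have a: "(2*t) choose 2 = t * (2*t - 1)"
    by (simp add: choose_two)
  have e: "even (t * (t - 1))" by (cases "even t") auto
  have b: "2 * (t choose 2) = t * (t - 1)"
    using e by (simp add: choose_two even_two_times_div_two)
  have "t * (2*t - 1) * c = t * (2*t - 1) * (t - 1)"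
    using assms(2) unfolding a by (metis b mult.assoc mult.commute mult.left_commute)
  moreover have "t * (2*t - 1) > 0" using assms(1) by simp
  ultimately show ?thesis by simp
qed

lemma trace_orth_proj:
  assumes "orth_proj_rank realF m l P"
  shows "(\<Sum>i<m. P i i) = of_nat l"
proof -
  obtain v where v: "\<forall>a<l. \<forall>a'<l. inner_F m (v a) (v a') = (if a = a' then 1 else 0)"
    "\<forall>i<m. \<forall>i'<m. P i i' = (\<Sum>a<l. v a i * cnj (v a i'))"
    using assms unfolding orth_proj_rank_def by blast
  have "(\<Sum>i<m. P i i) = (\<Sum>i<m. \<Sum>a<l. v a i * cnj (v a i))" using v(2) by simp
  also have "\<dots> = (\<Sum>a<l. inner_F m (v a) (v a))" unfolding inner_F_def by (rule sum.swap)
  also have "\<dots> = (\<Sum>a<l. 1)" using v(1) by simp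
  finally show ?thesis by simp
qed

lemma trace_coord:
  assumes onb: "orthonormal_basis realF m b" and J: "J \<subseteq> {..<m}"
  shows "(\<Sum>i<m. coord_proj b J i i) = of_nat (card J)"
proof -
  have "(\<Sum>i<m. coord_proj b J i i) = (\<Sum>j\<in>J. \<Sum>i<m. b j i * cnj (b j i))"
    unfolding coord_proj_def by (rule sum.swap)
  also have "\<dots> = (\<Sum>j\<in>J. 1)" using J onb_inner[OF onb] by (intro sum.cong refl) auto
  finally show ?thesis by simp
qed


lemma card_filter_sum: "finite A \<Longrightarrow> card {x\<in>A. P x} = (\<Sum>x\<in>A. if P x then 1 else 0::nat)"
  using sum.inter_filter[of A "\<lambda>_. 1::nat" P] by simp

lemma pairs_equal:
  fixes n :: "nat \<Rightarrow> nat \<Rightarrow> nat"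
  assumes sym: "\<And>x y. n x y = n y x"
    and L: "\<And>a a' c. a < m \<Longrightarrow> a' < m \<Longrightarrow> c < m \<Longrightarrow> a \<noteq> c \<Longrightarrow> a' \<noteq> c \<Longrightarrow> n a c = n a' c"
    and uv: "u < m" "v < m" "u \<noteq> v" and xy: "x < m" "y < m" "x \<noteq> y"
  shows "n u v = n x y"
proof (cases "x = v")
  case False
  have "n u v = n x v" using L[OF uv(1) xy(1) uv(2) uv(3)] False by blast
  also have "\<dots> = n v x" by (rule sym)
  also have "\<dots> = n y x" using L[OF uv(2) xy(2) xy(1)] False xy(3) by (metis)
  also have "\<dots> = n x y" by (rule sym)
  finally show ?thesis .
next
  case True
  have "n u v = n y v" using L[OF uv(1) xy(2) uv(2) uv(3)] True xy(3) by blast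
  also have "\<dots> = n x y" using True sym by simp
  finally show ?thesis .
qed

lemma double_count_pairs:
  fixes m t :: nat
  assumes finS: "finite S" and SJ: "\<forall>J\<in>S. J \<subseteq> {..<m} \<and> card J = t"
  shows "(\<Sum>p\<in>{p. p \<subseteq> {..<m} \<and> card p = 2}. card {J\<in>S. p \<subseteq> J}) = card S * (t choose 2)"
proof -
  let ?P2 = "{p. p \<subseteq> {..<m} \<and> card p = 2}"
  have finP: "finite ?P2" by (rule finite_subset[of _ "Pow {..<m}"]) auto
  have "(\<Sum>p\<in>?P2. card {J\<in>S. p \<subseteq> J}) = (\<Sum>p\<in>?P2. \<Sum>J\<in>S. if p \<subseteq> J then 1 else 0)"
    using finS by (simp add: card_filter_sum)
  also have "\<dots> = (\<Sum>J\<in>S. \<Sum>p\<in>?P2. if p \<subseteq> J then 1 else 0)" by (rule sum.swap)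
  also have "\<dots> = (\<Sum>J\<in>S. t choose 2)"
  proof (rule sum.cong[OF refl])
    fix J assume "J \<in> S"
    then have J: "J \<subseteq> {..<m}" "card J = t" using SJ by auto
    have "(\<Sum>p\<in>?P2. if p \<subseteq> J then 1 else 0) = card {p\<in>?P2. p \<subseteq> J}"
      by (rule card_filter_sum[OF finP, symmetric])
    also have "{p\<in>?P2. p \<subseteq> J} = {p. p \<subseteq> J \<and> card p = 2}" using J by auto
    also have "card \<dots> = t choose 2" using n_subsets[of J 2] J finite_subset[OF J(1)] by simp
    finally show "(\<Sum>p\<in>?P2. if p \<subseteq> J then 1 else 0) = t choose 2" .
  qed
  finally show ?thesis by simp
qed

lemma replication:
  assumes finS: "finite S" and SJ: "\<forall>J\<in>S. J \<subseteq> {..<m} \<and> card J = t"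
    and lam: "\<forall>j<m. \<forall>j'<m. j \<noteq> j' \<longrightarrow> card {J\<in>S. j \<in> J \<and> j' \<in> J} = lam"
    and j: "j < m"
  shows "(m - 1) * lam = card {J\<in>S. j \<in> J} * (t - 1)"
proof -
  let ?A = "{..<m} - {j}"
  have "(m - 1) * lam = (\<Sum>j'\<in>?A. card {J\<in>S. j \<in> J \<and> j' \<in> J})"
    using lam j by (simp add: card_Diff_singleton)
  also have "\<dots> = (\<Sum>j'\<in>?A. \<Sum>J\<in>S. if j \<in> J \<and> j' \<in> J then 1 else 0)"
    using finS by (simp add: card_filter_sum)
  also have "\<dots> = (\<Sum>J\<in>S. \<Sum>j'\<in>?A. if j \<in> J \<and> j' \<in> J then 1 else 0)" by (rule sum.swap)
  also have "\<dots> = (\<Sum>J\<in>S. if j \<in> J then t - 1 else 0)"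
  proof (rule sum.cong[OF refl])
    fix J assume "J \<in> S"
    then have J: "J \<subseteq> {..<m}" "card J = t" using SJ by auto
    show "(\<Sum>j'\<in>?A. if j \<in> J \<and> j' \<in> J then 1 else 0) = (if j \<in> J then t - 1 else 0)"
    proof (cases "j \<in> J")
      case True
      have "(\<Sum>j'\<in>?A. if j \<in> J \<and> j' \<in> J then 1 else 0) = (\<Sum>j'\<in>?A. if j' \<in> J then 1 else 0)"
        using True by simp
      also have "\<dots> = card {j'\<in>?A. j' \<in> J}"
        by (rule card_filter_sum[symmetric]) simp
      also have "{j'\<in>?A. j' \<in> J} = J - {j}" using J by auto
      also have "card \<dots> = t - 1" using J True finite_subset[OF J(1)] by (simp add: card_Diff_singleton)
      finally show ?thesis using True by simp
    qed simp
  qed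
  also have "\<dots> = card {J\<in>S. j \<in> J} * (t - 1)"
    unfolding card_filter_sum[OF finS] sum_distrib_right by (intro sum.cong) auto
  finally show ?thesis .
qed

theorem theorem3p17:
  fixes realF :: bool and m l :: nat and K :: "'k set"
    and B :: "'k \<Rightarrow> nat \<Rightarrow> cvec" and S :: "nat set set"
  assumes "0 < m" and "even m"
    and "maximal_MUB_set realF m K B"
    and "\<forall>J\<in>S. J \<subseteq> {0..<m} \<and> card J = l"
    and "fusion_frame realF (2 * dF realF m) (m div 2) m (K \<times> S)
           (\<lambda>(k, J). coord_proj (B k) J)"
  shows "grassmannian_2_design realF m (K \<times> S) (\<lambda>(k, J). coord_proj (B k) J)
         \<longleftrightarrow> block_design_2 m (m div 2) (m div 2 - 1) S"
proof -
  note m = assms(1,2)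
  have MUB: "MUB_set realF m K B" and finK: "finite K" and cK: "card K = kF realF m"
    using assms(3) unfolding maximal_MUB_set_def by auto
  obtain t where t: "m = 2 * t" using m(2) by blast
  have t1: "t \<ge> 1" using m(1) t by simp
  have mdiv: "m div 2 = t" using t by simp
  have SJ0: "\<forall>J\<in>S. J \<subseteq> {..<m}" using assms(4) by (auto simp: atLeast0LessThan)
  have Kne: "K \<noteq> {}" using cK finK unfolding kF_def by (auto split: if_splits)
  then obtain k0 where k0: "k0 \<in> K" by blast
  have ff: "finite (K \<times> S)" "card (K \<times> S) = 2 * dF realF m"
    "\<forall>i\<in>K \<times> S. orth_proj_rank realF m (m div 2) ((\<lambda>(k, J). coord_proj (B k) J) i)"
    using assms(5) unfolding fusion_frame_def by blast+
  have finS: "finite S" using finite_cartesian_productD2[OF ff(1) Kne] .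
  have cardS: "card S = 2 * (2 * t - 1)"
  proof -
    have "kF realF (2 * t) * card S = 2 * dF realF (2 * t)"
      using ff(2) cK finK finS t by (simp add: card_cartesian_product)
    then show ?thesis by (rule cardS_calc[OF t1])
  qed
  have cardJ: "\<forall>J\<in>S. card J = t"
  proof
    fix J assume J: "J \<in> S"
    have onb: "orthonormal_basis realF m (B k0)" using MUB k0 unfolding MUB_set_def by blast
    have "orth_proj_rank realF m (m div 2) (coord_proj (B k0) J)" using ff(3) k0 J by auto
    from trace_orth_proj[OF this] trace_coord[OF onb] J SJ0
    have "(of_nat (card J) :: complex) = of_nat (m div 2)" by simp
    then show "card J = t" using mdiv by (simp only: of_nat_eq_iff)
  qed
  have SJ: "\<forall>J\<in>S. J \<subseteq> {..<m} \<and> card J = t" using SJ0 cardJ by blast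
  define n where "n = (\<lambda>x y. card {J\<in>S. x \<in> J \<and> y \<in> J})"
  have nsym: "\<And>x y. n x y = n y x" unfolding n_def by (simp add: conj_commute)
  have npair: "\<And>u v. card {J\<in>S. {u, v} \<subseteq> J} = n u v" unfolding n_def by simp
  show ?thesis
  proof
    assume G: "grassmannian_2_design realF m (K \<times> S) (\<lambda>(k, J). coord_proj (B k) J)"
    have L: "\<And>a a' c. a < m \<Longrightarrow> a' < m \<Longrightarrow> c < m \<Longrightarrow> a \<noteq> c \<Longrightarrow> a' \<noteq> c \<Longrightarrow> n a c = n a' c"
    proof -
      fix a a' c assume h: "a < m" "a' < m" "c < m" "a \<noteq> c" "a' \<noteq> c"
      have "n a c = n (tp a a' a) (tp a a' c)"
        unfolding n_def by (rule design_swap[OF MUB finK k0 finS SJ0 G h(1,3,1,2)])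
      also have "\<dots> = n a' c" using h unfolding tp_def by auto
      finally show "n a c = n a' c" .
    qed
    have m2: "0 < m" "1 < m" using t1 t by auto
    have alleq: "\<And>u v. u < m \<Longrightarrow> v < m \<Longrightarrow> u \<noteq> v \<Longrightarrow> n u v = n 0 1"
    proof -
      fix u v assume "u < m" "v < m" "u \<noteq> v"
      have z: "(0::nat) \<noteq> 1" by simp
      show "n u v = n 0 1" by (rule pairs_equal[where n=n and m=m and u=u and v=v and x=0 and y=1, OF nsym L \<open>u < m\<close> \<open>v < m\<close> \<open>u \<noteq> v\<close> m2 z])
    qed
    let ?P2 = "{p. p \<subseteq> {..<m} \<and> card p = 2}"
    have "(\<Sum>p\<in>?P2. card {J\<in>S. p \<subseteq> J}) = (\<Sum>p\<in>?P2. n 0 1)"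
    proof (rule sum.cong[OF refl])
      fix p assume pP: "p \<in> ?P2"
      then have "card p = 2" "p \<subseteq> {..<m}" by auto
      then obtain u v where p: "p = {u, v}" "u \<noteq> v" "u < m" "v < m"
        unfolding card_2_iff by blast
      have "card {J\<in>S. p \<subseteq> J} = n u v" using p(1) npair by simp
      then show "card {J\<in>S. p \<subseteq> J} = n 0 1" using alleq[OF p(3,4,2)] by simp
    qed
    also have "\<dots> = (m choose 2) * n 0 1" using n_subsets[of "{..<m}" 2] by simp
    finally have "(m choose 2) * n 0 1 = card S * (t choose 2)"
      using double_count_pairs[OF finS SJ] by simp
    then have lam: "n 0 1 = t - 1" using lam_calc[OF t1] cardS t by simp
    show "block_design_2 m (m div 2) (m div 2 - 1) S"
      unfolding block_design_2_def mdiv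
    proof (intro conjI allI impI)
      show "\<forall>J\<in>S. J \<subseteq> {0..<m} \<and> card J = t" using assms(4) cardJ by blast
    next
      fix p assume pP: "p \<subseteq> {0..<m} \<and> card p = 2"
      then have "card p = 2" "p \<subseteq> {0..<m}" by auto
      then obtain u v where p: "p = {u, v}" "u \<noteq> v" "u < m" "v < m"
        unfolding card_2_iff by auto
      have "card {J\<in>S. p \<subseteq> J} = n u v" using p(1) npair by simp
      then show "card {J\<in>S. p \<subseteq> J} = t - 1" using alleq[OF p(3,4,2)] lam by simp
    qed
  next
    assume BD: "block_design_2 m (m div 2) (m div 2 - 1) S"
    have lamv: "\<forall>j<m. \<forall>j'<m. j \<noteq> j' \<longrightarrow> n j j' = t - 1"
    proof (intro allI impI)
      fix j j' assume "j < m" "j' < m" "j \<noteq> j'"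
      then have "{j, j'} \<subseteq> {0..<m} \<and> card {j, j'} = 2" by auto
      moreover have "\<forall>p. p \<subseteq> {0..<m} \<and> card p = 2 \<longrightarrow> card {J\<in>S. p \<subseteq> J} = m div 2 - 1"
        using BD unfolding block_design_2_def by blast
      ultimately have "card {J\<in>S. {j, j'} \<subseteq> J} = m div 2 - 1" by blast
      then have "card {J\<in>S. {j, j'} \<subseteq> J} = t - 1" using mdiv by simp
      then show "n j j' = t - 1" using npair by simp
    qed
    have rv: "\<forall>j<m. n j j = m - 1"
    proof (intro allI impI)
      fix j assume j: "j < m"
      have nj: "n j j = card {J\<in>S. j \<in> J}" unfolding n_def by simp
      show "n j j = m - 1"
      proof (cases "t = 1")
        case False
        have "(m - 1) * (t - 1) = card {J\<in>S. j \<in> J} * (t - 1)"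
          using replication[OF finS SJ _ j] lamv unfolding n_def by blast
        then show ?thesis using False t1 nj by simp
      next
        case True
        have sub: "S \<subseteq> {{0}, {1}}"
        proof
          fix J assume "J \<in> S"
          then have "J \<subseteq> {..<2}" "card J = 1" using SJ True t by auto
          then obtain x where "J = {x}" "x < 2" by (auto simp: card_1_singleton_iff)
          then show "J \<in> {{0}, {1}}" by (cases x) auto
        qed
        have "card S = card {{0::nat}, {1}}" using cardS True by simp
        then have Seq: "S = {{0}, {1}}" using card_subset_eq[OF _ sub] by simp
        have "j = 0 \<or> j = 1" using j True t by auto
        then have "{J\<in>S. j \<in> J} = {{j}}" using Seq by auto
        then show ?thesis using nj True t by simp
      qed
    qed
    have nform: "\<forall>j<m. \<forall>j'<m. card {J\<in>S. j \<in> J \<and> j' \<in> J} = (if j = j' then m - 1 else m div 2 - 1)"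
      using lamv rv mdiv unfolding n_def by auto
    let ?a = "of_nat (card K) * of_nat (m div 2 - 1) + (of_nat (m - 1) - of_nat (m div 2 - 1)) * c\<alpha> realF"
    let ?b = "(of_nat (m - 1) - of_nat (m div 2 - 1)) * c\<alpha> realF"
    let ?g = "(of_nat (m - 1) - of_nat (m div 2 - 1)) * c\<gamma> realF"
    have DI: "\<And>a b c d. a < m \<Longrightarrow> b < m \<Longrightarrow> c < m \<Longrightarrow> d < m \<Longrightarrow>
      (\<Sum>i\<in>K \<times> S. tensor ((\<lambda>(k, J). coord_proj (B k) J) i) ((\<lambda>(k, J). coord_proj (B k) J) i) (a, b) (c, d))
      = Rg ?a ?b ?g a b c d"
      by (rule design_if[OF MUB finK cK m finS SJ0 nform])
    have gr: "?g \<noteq> 0 \<Longrightarrow> realF" unfolding c\<gamma>_def by (cases realF) auto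
    show "grassmannian_2_design realF m (K \<times> S) (\<lambda>(k, J). coord_proj (B k) J)"
      unfolding grassmannian_2_design_def
    proof (intro allI impI)
      fix U a b c d assume U: "unitary_F realF m U" and abcd: "a < m" "b < m" "c < m" "d < m"
      have "(\<Sum>i\<in>K \<times> S. tensor (conj_by m U ((\<lambda>(k, J). coord_proj (B k) J) i)) (conj_by m U ((\<lambda>(k, J). coord_proj (B k) J) i)) (a, b) (c, d))
        = (\<Sum>a'<m. \<Sum>b'<m. \<Sum>c'<m. \<Sum>d'<m. (U a a' * cnj (U c c') * U b b' * cnj (U d d')) *
              (\<Sum>i\<in>K \<times> S. ((\<lambda>(k, J). coord_proj (B k) J) i) a' c' * ((\<lambda>(k, J). coord_proj (B k) J) i) b' d'))"
        by (rule conj_tensor_sum)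
      also have "\<dots> = (\<Sum>a'<m. \<Sum>b'<m. \<Sum>c'<m. \<Sum>d'<m. (U a a' * cnj (U c c') * U b b' * cnj (U d d')) * Rg ?a ?b ?g a' b' c' d')"
      proof (intro sum.cong refl)
        fix a' b' c' d' assume "a' \<in> {..<m}" "b' \<in> {..<m}" "c' \<in> {..<m}" "d' \<in> {..<m}"
        then have "(\<Sum>i\<in>K \<times> S. ((\<lambda>(k, J). coord_proj (B k) J) i) a' c' * ((\<lambda>(k, J). coord_proj (B k) J) i) b' d')
            = Rg ?a ?b ?g a' b' c' d'"
          using DI[of a' b' c' d'] unfolding tensor_def by simp
        then show "(U a a' * cnj (U c c') * U b b' * cnj (U d d')) *
              (\<Sum>i\<in>K \<times> S. ((\<lambda>(k, J). coord_proj (B k) J) i) a' c' * ((\<lambda>(k, J). coord_proj (B k) J) i) b' d')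
            = (U a a' * cnj (U c c') * U b b' * cnj (U d d')) * Rg ?a ?b ?g a' b' c' d'" by (rule arg_cong)
      qed
      also have "\<dots> = Rg ?a ?b ?g a b c d" by (rule Rg_invariant[OF U gr abcd])
      also have "\<dots> = (\<Sum>i\<in>K \<times> S. tensor ((\<lambda>(k, J). coord_proj (B k) J) i) ((\<lambda>(k, J). coord_proj (B k) J) i) (a, b) (c, d))"
        by (rule DI[OF abcd, symmetric])
      finally show "(\<Sum>i\<in>K \<times> S. tensor ((\<lambda>(k, J). coord_proj (B k) J) i) ((\<lambda>(k, J). coord_proj (B k) J) i) (a, b) (c, d)) =
         (\<Sum>i\<in>K \<times> S. tensor (conj_by m U ((\<lambda>(k, J). coord_proj (B k) J) i)) (conj_by m U ((\<lambda>(k, J). coord_proj (B k) J) i)) (a, b) (c, d))"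
        by (rule sym)
    qed
  qed
qed

end
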